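(* Let $M$ and $N$ be $\lambda$-terms. If there is no $M'$ with $M \twoheadrightarrow_\beta M'$ and $\mathrm{BT}^c(M') \le \mathrm{BT}^c(N)$ (i.e. no reduct of $M$ improves $N$ globally), then $M \neq_\beta N$.
   Context: Untyped $\lambda$-calculus modulo $\alpha$. A head reduction step is a $\beta$-step $\lambda x_1\ldots x_n.(\lambda y.P)QQ_1\ldots Q_m \to \lambda x_1\ldots x_n.P[y:=Q]Q_1\ldots Q_m$ ($n,m\ge0$); a head normal form (hnf) is a term $\lambda x_1\ldots x_n.\,yQ_1\ldots Q_m$. The clocked Böhm tree $\mathrm{BT}^c(M)$ is defined coinductively: $\bot$ if $M$ has no hnf; otherwise, if the head reduction of $M$ to hnf is $M \to_h^k \lambda x_1\ldots x_n.\,yM_1\ldots M_m$ ($k$ steps), then $\mathrm{BT}^c(M)$ is $\lambda x_1\ldots x_n.\,y\,\mathrm{BT}^c(M_1)\ldots\mathrm{BT}^c(M_m)$ with its root node annotated by $k$. Positions are sequences over $\{0,1,2\}$ ($0$: body of abstraction, $1$: function part, $2$: argument of application). For annotated trees, $T_1 \le T_2$ means: $T_1,T_2$ coincide after erasing annotations, and at every position $p$ either neither subtree at $p$ has a root annotation or both do with annotations $k_1 \le k_2$. *)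

theory Defs
  imports Main
begin

datatype dB = Var nat | App dB dB | Abs dB

primrec lift :: "dB \<Rightarrow> nat \<Rightarrow> dB" where
  "lift (Var i) k = (if i < k then Var i else Var (i + 1))"
| "lift (App s t) k = App (lift s k) (lift t k)"
| "lift (Abs s) k = Abs (lift s (k + 1))"

primrec subst :: "dB \<Rightarrow> dB \<Rightarrow> nat \<Rightarrow> dB" where
  "subst (Var i) s k = (if k < i then Var (i - 1) else if i = k then s else Var i)"
| "subst (App t u) s k = App (subst t s k) (subst u s k)"
| "subst (Abs t) s k = Abs (subst t (lift s 0) (k + 1))"

inductive beta :: "dB \<Rightarrow> dB \<Rightarrow> bool" where
  beta_redex: "beta (App (Abs s) t) (subst s t 0)"
| beta_appL: "beta s t \<Longrightarrow> beta (App s u) (App t u)"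
| beta_appR: "beta s t \<Longrightarrow> beta (App u s) (App u t)"
| beta_abs: "beta s t \<Longrightarrow> beta (Abs s) (Abs t)"

abbreviation beta_red :: "dB \<Rightarrow> dB \<Rightarrow> bool" where
  "beta_red \<equiv> beta\<^sup>*\<^sup>*"

abbreviation beta_eq :: "dB \<Rightarrow> dB \<Rightarrow> bool" where
  "beta_eq \<equiv> (sup beta beta\<inverse>\<inverse>)\<^sup>*\<^sup>*"

inductive head :: "dB \<Rightarrow> dB \<Rightarrow> bool" where
  head_redex: "head (App (Abs s) t) (subst s t 0)"
| head_app: "head s s' \<Longrightarrow> (\<forall>b. s \<noteq> Abs b) \<Longrightarrow> head (App s u) (App s' u)"
| head_abs: "head s s' \<Longrightarrow> head (Abs s) (Abs s')"

fun is_var_app :: "dB \<Rightarrow> bool" where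
  "is_var_app (Var i) = True"
| "is_var_app (App s t) = is_var_app s"
| "is_var_app (Abs s) = False"

fun is_hnf :: "dB \<Rightarrow> bool" where
  "is_hnf (Abs s) = is_hnf s"
| "is_hnf t = is_var_app t"

definition has_hnf :: "dB \<Rightarrow> bool" where
  "has_hnf M \<longleftrightarrow> (\<exists>k H. (head ^^ k) M H \<and> is_hnf H)"

definition hsteps :: "dB \<Rightarrow> nat" where
  "hsteps M = (LEAST k. \<exists>H. (head ^^ k) M H \<and> is_hnf H)"

definition hnf_of :: "dB \<Rightarrow> dB" where
  "hnf_of M = (THE H. (head ^^ hsteps M) M H \<and> is_hnf H)"

text \<open>Positions: lists over {0,1,2}: 0 body of abstraction, 1 function part,
  2 argument of an application.\<close>
type_synonym pos = "nat list"

datatype node = NBot | NVar nat | NAbs | NApp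

text \<open>An annotated tree maps each position of the tree to its node label and
  an optional annotation; positions outside the tree are mapped to None.\<close>
type_synonym atree = "pos \<Rightarrow> (node \<times> nat option) option"

fun root_node :: "dB \<Rightarrow> node" where
  "root_node (Var i) = NVar i"
| "root_node (Abs s) = NAbs"
| "root_node (App s t) = NApp"

function (sequential) bt :: "dB \<Rightarrow> atree"
  and spine :: "dB \<Rightarrow> nat option \<Rightarrow> atree" where
  "bt M p =
     (if has_hnf M then spine (hnf_of M) (Some (hsteps M)) p
      else if p = [] then Some (NBot, None) else None)"
| "spine H a [] = Some (root_node H, a)"
| "spine (Abs t) a (0 # p) = spine t None p"
| "spine (App s t) a (Suc 0 # p) = spine s None p"
| "spine (App s t) a (Suc (Suc 0) # p) = bt t p"
| "spine H a p = None"
  by pat_completeness auto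
termination
  by (relation "measure (\<lambda>x. case x of Inl (M, p) \<Rightarrow> 2 * length p + 1
                                      | Inr (H, a, p) \<Rightarrow> 2 * length p)") auto

abbreviation BTc :: "dB \<Rightarrow> atree" where
  "BTc M \<equiv> bt M"

definition atree_le :: "atree \<Rightarrow> atree \<Rightarrow> bool" where
  "atree_le T1 T2 \<longleftrightarrow>
     (\<forall>p. map_option fst (T1 p) = map_option fst (T2 p)) \<and>
     (\<forall>p x1 x2. T1 p = Some x1 \<longrightarrow> T2 p = Some x2 \<longrightarrow>
        (snd x1 = None \<and> snd x2 = None) \<or>
        (\<exists>k1 k2. snd x1 = Some k1 \<and> snd x2 = Some k2 \<and> k1 \<le> k2))"

end

theory Submission
  imports Defs
begin


lemma lift_lift:
  "i < k + 1 \<Longrightarrow> lift (lift t i) (Suc k) = lift (lift t k) i"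
  by (induct t arbitrary: i k) auto

lemma lift_subst [simp]:
  "j < i + 1 \<Longrightarrow> lift (subst t s j) i = subst (lift t (i + 1)) (lift s i) j"
  by (induct t arbitrary: i j s) (simp_all add: diff_Suc lift_lift split: nat.split)

lemma lift_subst_lt:
  "i < j + 1 \<Longrightarrow> lift (subst t s j) i = subst (lift t i) (lift s i) (j + 1)"
  by (induct t arbitrary: i j s) (auto simp: lift_lift)

lemma subst_lift [simp]: "subst (lift t k) s k = t"
  by (induct t arbitrary: k s) simp_all

lemma subst_subst:
  "i < j + 1 \<Longrightarrow> subst (subst t (lift v i) (Suc j)) (subst u v j) i = subst (subst t u i) v j"
  by (induct t arbitrary: i j u v)
    (simp_all add: diff_Suc lift_lift [symmetric] lift_subst_lt split: nat.split)

inductive par :: "dB \<Rightarrow> dB \<Rightarrow> bool" where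
  par_var [simp, intro!]: "par (Var n) (Var n)"
| par_abs [simp, intro!]: "par s s' \<Longrightarrow> par (Abs s) (Abs s')"
| par_app [simp, intro!]: "par s s' \<Longrightarrow> par t t' \<Longrightarrow> par (App s t) (App s' t')"
| par_beta [simp, intro!]: "par s s' \<Longrightarrow> par t t' \<Longrightarrow> par (App (Abs s) t) (subst s' t' 0)"

inductive_cases par_cases [elim!]:
  "par (Var n) t"
  "par (Abs s) t"
  "par (App s t) u"

lemma par_refl [simp, intro!]: "par t t"
  by (induct t) simp_all

lemma par_lift [simp, intro]: "par s s' \<Longrightarrow> par (lift s k) (lift s' k)"
  by (induct s s' arbitrary: k rule: par.induct) auto

lemma par_subst [intro]:
  "par s s' \<Longrightarrow> par t t' \<Longrightarrow> par (subst s t n) (subst s' t' n)"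
proof (induct s s' arbitrary: t t' n rule: par.induct)
  case (par_beta s s' u u')
  then show ?case
    by (metis Defs.subst.simps(2,3) par.par_beta subst_subst zero_less_Suc Suc_eq_plus1 par_lift)
qed auto

lemma diamond_par: "par M N1 \<Longrightarrow> par M N2 \<Longrightarrow> \<exists>P. par N1 P \<and> par N2 P"
  by (induct M N1 arbitrary: N2 rule: par.induct) (blast intro: par_subst)+

lemma beta_par: "beta s t \<Longrightarrow> par s t"
  by (induct rule: beta.induct) auto

lemma rtr_App1: "beta\<^sup>*\<^sup>* s s' \<Longrightarrow> beta\<^sup>*\<^sup>* (App s t) (App s' t)"
  by (induct rule: rtranclp_induct) (auto intro: rtranclp.rtrancl_into_rtrancl beta.intros)
lemma rtr_App2: "beta\<^sup>*\<^sup>* t t' \<Longrightarrow> beta\<^sup>*\<^sup>* (App s t) (App s t')"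
  by (induct rule: rtranclp_induct) (auto intro: rtranclp.rtrancl_into_rtrancl beta.intros)
lemma rtr_Abs: "beta\<^sup>*\<^sup>* s s' \<Longrightarrow> beta\<^sup>*\<^sup>* (Abs s) (Abs s')"
  by (induct rule: rtranclp_induct) (auto intro: rtranclp.rtrancl_into_rtrancl beta.intros)

lemma par_beta_rtr: "par s t \<Longrightarrow> beta\<^sup>*\<^sup>* s t"
proof (induct rule: par.induct)
  case (par_app s s' t t')
  then show ?case by (meson rtr_App1 rtr_App2 rtranclp_trans)
next
  case (par_beta s s' t t')
  have "beta\<^sup>*\<^sup>* (App (Abs s) t) (App (Abs s') t')"
    by (meson par_beta rtr_Abs rtr_App1 rtr_App2 rtranclp_trans)
  then show ?case by (meson beta.beta_redex rtranclp.rtrancl_into_rtrancl)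
qed (auto intro: rtr_Abs)

lemma beta_rtr_par_rtr: "beta\<^sup>*\<^sup>* s t \<longleftrightarrow> par\<^sup>*\<^sup>* s t"
proof
  assume "beta\<^sup>*\<^sup>* s t" then show "par\<^sup>*\<^sup>* s t"
    by (induct rule: rtranclp_induct) (auto intro: rtranclp.rtrancl_into_rtrancl beta_par)
next
  assume "par\<^sup>*\<^sup>* s t" then show "beta\<^sup>*\<^sup>* s t"
    by (induct rule: rtranclp_induct) (auto intro: rtranclp_trans par_beta_rtr)
qed

lemma strip: "par\<^sup>*\<^sup>* M N1 \<Longrightarrow> par M N2 \<Longrightarrow> \<exists>P. par N1 P \<and> par\<^sup>*\<^sup>* N2 P"
proof (induct arbitrary: N2 rule: rtranclp_induct)
  case base then show ?case by (intro exI[of _ N2]) auto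
next
  case (step y z)
  then obtain P where "par y P" "par\<^sup>*\<^sup>* N2 P" by blast
  with step(2) diamond_par obtain Q where "par z Q" "par P Q" by blast
  then show ?case using \<open>par\<^sup>*\<^sup>* N2 P\<close> by (meson rtranclp.rtrancl_into_rtrancl)
qed

lemma confl_par: "par\<^sup>*\<^sup>* M N2 \<Longrightarrow> par\<^sup>*\<^sup>* M N1 \<Longrightarrow> \<exists>P. par\<^sup>*\<^sup>* N1 P \<and> par\<^sup>*\<^sup>* N2 P"
proof (induct arbitrary: N1 rule: rtranclp_induct)
  case base then show ?case by (intro exI[of _ N1]) auto
next
  case (step y z)
  then obtain P where "par\<^sup>*\<^sup>* N1 P" "par\<^sup>*\<^sup>* y P" by blast
  with strip[OF this(2) step(2)] obtain Q where "par P Q" "par\<^sup>*\<^sup>* z Q" by blast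
  then show ?case using \<open>par\<^sup>*\<^sup>* N1 P\<close> by (meson rtranclp.rtrancl_into_rtrancl)
qed

lemma CR: "beta_eq M N \<Longrightarrow> \<exists>Z. beta_red M Z \<and> beta_red N Z"
proof (induct rule: rtranclp_induct)
  case base then show ?case by auto
next
  case (step y z)
  then obtain Z where Z: "beta_red M Z" "beta_red y Z" by blast
  show ?case
  proof (cases "beta y z")
    case True
    then have "par\<^sup>*\<^sup>* y z" by (simp add: beta_par r_into_rtranclp)
    with Z confl_par beta_rtr_par_rtr obtain W where "beta_red Z W" "beta_red z W"
      by (metis r_into_rtranclp)
    then show ?thesis using Z by (meson rtranclp_trans)
  next
    case False
    then have "beta z y" using step(2) by auto
    then show ?thesis using Z by (meson converse_rtranclp_into_rtranclp)
  qed
qed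


inductive_cases head_cases: "head (Var n) t" "head (Abs s) t" "head (App s t) u"

lemma head_det: "head M A \<Longrightarrow> head M B \<Longrightarrow> A = B"
proof (induct M A arbitrary: B rule: head.induct)
  case (head_redex s t) from head_redex show ?case by (cases rule: head.cases) auto
next
  case (head_app s s' u) from head_app(4,3) show ?case by (cases rule: head.cases) (auto simp: head_app(2))
next
  case (head_abs s s') from head_abs(3) show ?case by (cases rule: head.cases) (auto simp: head_abs(2))
qed

lemma var_app_no_head: "is_var_app H \<Longrightarrow> \<not> head H X"
proof (induct H arbitrary: X)
  case (App H1 H2)
  show ?case
  proof
    assume "head (App H1 H2) X"
    then show False using App by (cases rule: head.cases) auto
  qed
qed (auto elim: head.cases)

lemma hnf_no_head: "is_hnf H \<Longrightarrow> \<not> head H X"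
proof (induct H arbitrary: X)
  case (Abs H)
  show ?case
  proof
    assume "head (Abs H) X"
    then show False using Abs by (cases rule: head.cases) auto
  qed
next
  case (Var x) then show ?case using var_app_no_head[of "Var x"] by simp
next
  case (App H1 H2) then show ?case using var_app_no_head[of "App H1 H2"] by simp
qed

lemma hnf_unique_aux:
  "(head ^^ a) N H1 \<Longrightarrow> is_hnf H1 \<Longrightarrow> (head ^^ b) N H2 \<Longrightarrow> is_hnf H2 \<Longrightarrow> a = b \<and> H1 = H2"
proof (induct a arbitrary: N b)
  case 0
  show ?case
  proof (cases b)
    case (Suc b')
    then obtain y where "head N y" using 0 relpowp_Suc_D2[where P=head] by blast
    then show ?thesis using 0 hnf_no_head by auto
  qed (use 0 in auto)
next
  case (Suc a)
  then obtain N1 where N1: "head N N1" "(head ^^ a) N1 H1" using relpowp_Suc_D2[where P=head] by blast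
  show ?case
  proof (cases b)
    case 0 then show ?thesis using Suc N1 hnf_no_head by auto
  next
    case (Suc b')
    then obtain N2 where "head N N2" "(head ^^ b') N2 H2" using Suc.prems relpowp_Suc_D2[where P=head] by blast
    then show ?thesis using Suc.hyps[of N1 b'] N1 Suc.prems head_det \<open>b = Suc b'\<close> by metis
  qed
qed

lemma hsteps_hnf_of:
  assumes "(head ^^ k) N H" "is_hnf H"
  shows "hsteps N = k" "hnf_of N = H"
proof -
  have ex: "\<exists>H. (head ^^ k) N H \<and> is_hnf H" using assms by blast
  have "\<exists>H. (head ^^ hsteps N) N H \<and> is_hnf H" unfolding hsteps_def
    by (rule LeastI[where P="\<lambda>k. \<exists>H. (head ^^ k) N H \<and> is_hnf H" and k=k]) (rule ex)
  then obtain H' where H': "(head ^^ hsteps N) N H'" "is_hnf H'" by blast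
  from hnf_unique_aux[OF assms H'] show "hsteps N = k" by simp
  show "hnf_of N = H" unfolding hnf_of_def
  proof (rule the_equality)
    show "(head ^^ hsteps N) N H \<and> is_hnf H" using assms \<open>hsteps N = k\<close> by simp
  next
    fix X assume "(head ^^ hsteps N) N X \<and> is_hnf X"
    then show "X = H" using hnf_unique_aux[OF assms] by blast
  qed
qed

lemma has_hnf_obtain:
  assumes "has_hnf M" shows "(head ^^ hsteps M) M (hnf_of M)" "is_hnf (hnf_of M)"
proof -
  obtain k H where "(head ^^ k) M H" "is_hnf H" using assms unfolding has_hnf_def by blast
  with hsteps_hnf_of[OF this] show "(head ^^ hsteps M) M (hnf_of M)" "is_hnf (hnf_of M)" by auto
qed

lemma par_var_app: "par s t \<Longrightarrow> is_var_app s \<Longrightarrow> is_var_app t"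
  by (induct rule: par.induct) auto

lemma par_hnf: "par s t \<Longrightarrow> is_hnf s \<Longrightarrow> is_hnf t"
proof (induct rule: par.induct)
  case (par_app s s' t t')
  then show ?case using par_var_app[of "App s t" "App s' t'"] by auto
qed auto

fun is_abs :: "dB \<Rightarrow> bool" where
  "is_abs (Abs s) = True" | "is_abs _ = False"

lemma par_head:
  "head M M1 \<Longrightarrow> par M N \<Longrightarrow> par M1 N \<or> (\<exists>N1. head N N1 \<and> par M1 N1 \<and> is_abs N = is_abs M)"
proof (induct M M1 arbitrary: N rule: head.induct)
  case (head_redex s t)
  from head_redex show ?case
    by (auto intro: par_subst head.head_redex)
next
  case (head_app s s' u)
  from head_app.prems obtain a u' where N: "N = App a u'" "par s a" "par u u'"
    using head_app.hyps(3) by (auto elim!: par_cases)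
  from head_app.hyps(2)[OF N(2)] show ?case
  proof
    assume "par s' a" then show ?thesis using N by auto
  next
    assume "\<exists>N1. head a N1 \<and> par s' N1 \<and> is_abs a = is_abs s"
    then obtain a1 where "head a a1" "par s' a1" "is_abs a = is_abs s" by blast
    moreover have "\<not> is_abs s" using head_app.hyps(3) by (cases s) auto
    ultimately have "\<forall>b. a \<noteq> Abs b" by auto
    then show ?thesis using N \<open>head a a1\<close> \<open>par s' a1\<close> by (auto intro: head.head_app)
  qed
next
  case (head_abs s s')
  from head_abs.prems obtain a where N: "N = Abs a" "par s a" by auto
  from head_abs.hyps(2)[OF N(2)] N show ?case by (auto intro: head.head_abs)
qed

lemma clock_par:
  "(head ^^ k) M H \<Longrightarrow> is_hnf H \<Longrightarrow> par M N \<Longrightarrow>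
   \<exists>k' H'. k' \<le> k \<and> (head ^^ k') N H' \<and> is_hnf H' \<and> par H H'"
proof (induct k arbitrary: M N)
  case 0
  then show ?case using par_hnf by (intro exI[of _ 0] exI[of _ N]) auto
next
  case (Suc k)
  then obtain M1 where M1: "head M M1" "(head ^^ k) M1 H" using relpowp_Suc_D2[where P=head] by blast
  from par_head[OF M1(1) Suc.prems(3)] show ?case
  proof
    assume "par M1 N"
    from Suc.hyps[OF M1(2) Suc.prems(2) this] show ?thesis by (meson le_Suc_eq)
  next
    assume "\<exists>N1. head N N1 \<and> par M1 N1 \<and> is_abs N = is_abs M"
    then obtain N1 where "head N N1" "par M1 N1" by blast
    from Suc.hyps[OF M1(2) Suc.prems(2) this(2)] obtain k' H' where
      "k' \<le> k" "(head ^^ k') N1 H'" "is_hnf H'" "par H H'" by blast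
    moreover have "(head ^^ Suc k') N H'" by (rule relpowp_Suc_I2) fact+
    ultimately show ?thesis by (meson Suc_le_mono)
  qed
qed

lemma clock_par':
  assumes "has_hnf M" "par M N"
  shows "has_hnf N" "hsteps N \<le> hsteps M" "par (hnf_of M) (hnf_of N)"
proof -
  from clock_par[OF has_hnf_obtain[OF assms(1)] assms(2)] obtain k' H' where
    H': "k' \<le> hsteps M" "(head ^^ k') N H'" "is_hnf H'" "par (hnf_of M) H'" by blast
  from hsteps_hnf_of[OF H'(2,3)] H' show "has_hnf N" "hsteps N \<le> hsteps M" "par (hnf_of M) (hnf_of N)"
    unfolding has_hnf_def by auto
qed



inductive wh :: "dB \<Rightarrow> dB \<Rightarrow> bool" where
  wh_redex: "wh (App (Abs s) t) (subst s t 0)"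
| wh_app: "wh s s' \<Longrightarrow> wh (App s u) (App s' u)"

lemma wh_not_abs: "wh s t \<Longrightarrow> \<not> is_abs s"
  by (induct rule: wh.induct) auto

lemma wh_head: "wh s t \<Longrightarrow> head s t"
proof (induct rule: wh.induct)
  case (wh_redex s t) then show ?case by (rule head.head_redex)
next
  case (wh_app s s' u)
  then have "\<forall>b. s \<noteq> Abs b" using wh_not_abs by fastforce
  then show ?case using wh_app by (auto intro: head.head_app)
qed

lemma wh_lift: "wh s t \<Longrightarrow> wh (lift s k) (lift t k)"
proof (induct arbitrary: k rule: wh.induct)
  case (wh_redex s t) then show ?case using wh.wh_redex[of "lift s (Suc k)" "lift t k"] by simp
qed (auto intro: wh.intros)

lemma wh_subst: "wh s t \<Longrightarrow> wh (subst s N k) (subst t N k)"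
proof (induct arbitrary: k N rule: wh.induct)
  case (wh_redex s t)
  have "wh (subst (App (Abs s) t) N k) (subst (subst s (lift N 0) (Suc k)) (subst t N k) 0)"
    by (simp add: wh.wh_redex)
  then show ?case using subst_subst[of 0 k s N t] by simp
qed (auto intro: wh.intros)

lemma whs_lift: "wh\<^sup>*\<^sup>* s t \<Longrightarrow> wh\<^sup>*\<^sup>* (lift s k) (lift t k)"
  by (induct rule: rtranclp_induct) (auto intro: rtranclp.rtrancl_into_rtrancl wh_lift)
lemma whs_subst: "wh\<^sup>*\<^sup>* s t \<Longrightarrow> wh\<^sup>*\<^sup>* (subst s N k) (subst t N k)"
  by (induct rule: rtranclp_induct) (auto intro: rtranclp.rtrancl_into_rtrancl wh_subst)
lemma whs_app: "wh\<^sup>*\<^sup>* s t \<Longrightarrow> wh\<^sup>*\<^sup>* (App s u) (App t u)"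
  by (induct rule: rtranclp_induct) (auto intro: rtranclp.rtrancl_into_rtrancl wh_app)

inductive std :: "dB \<Rightarrow> dB \<Rightarrow> bool" where
  std_var: "wh\<^sup>*\<^sup>* M (Var i) \<Longrightarrow> std M (Var i)"
| std_abs: "wh\<^sup>*\<^sup>* M (Abs P) \<Longrightarrow> std P Q \<Longrightarrow> std M (Abs Q)"
| std_app: "wh\<^sup>*\<^sup>* M (App P1 P2) \<Longrightarrow> std P1 Q1 \<Longrightarrow> std P2 Q2 \<Longrightarrow> std M (App Q1 Q2)"

lemma std_refl: "std M M"
proof (induct M)
  case (Var i) show ?case by (rule std.std_var[OF rtranclp.rtrancl_refl])
next
  case (App M1 M2) show ?case by (rule std.std_app[OF rtranclp.rtrancl_refl App(1) App(2)])
next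
  case (Abs M) show ?case by (rule std.std_abs[OF rtranclp.rtrancl_refl Abs])
qed

lemma std_prepend:
  assumes "wh\<^sup>*\<^sup>* M M'" "std M' N" shows "std M N"
  using assms(2)
proof (cases rule: std.cases)
  case (std_var i) then show ?thesis using std.std_var[OF rtranclp_trans[OF assms(1)]] by simp
next
  case (std_abs P Q) then show ?thesis using std.std_abs[OF rtranclp_trans[OF assms(1)]] by simp
next
  case (std_app P1 P2 Q1 Q2) then show ?thesis using std.std_app[OF rtranclp_trans[OF assms(1)]] by simp
qed

lemma std_lift: "std M N \<Longrightarrow> std (lift M k) (lift N k)"
proof (induct arbitrary: k rule: std.induct)
  case (std_var M i)
  have w: "wh\<^sup>*\<^sup>* (lift M k) (lift (Var i) k)" using whs_lift[OF std_var] .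
  show ?case
  proof (cases "i < k")
    case True then show ?thesis using std.std_var[of "lift M k" i] w by simp
  next
    case False then show ?thesis using std.std_var[of "lift M k" "i+1"] w by simp
  qed
next
  case (std_abs M P Q)
  have w: "wh\<^sup>*\<^sup>* (lift M k) (Abs (lift P (Suc k)))" using whs_lift[OF std_abs(1), of k] by simp
  show ?case using std.std_abs[OF w std_abs(3)] by simp
next
  case (std_app M P1 P2 Q1 Q2)
  have w: "wh\<^sup>*\<^sup>* (lift M k) (App (lift P1 k) (lift P2 k))" using whs_lift[OF std_app(1), of k] by simp
  show ?case using std.std_app[OF w std_app(3) std_app(5)] by simp
qed

lemma std_subst: "std M M' \<Longrightarrow> std N N' \<Longrightarrow> std (subst M N k) (subst M' N' k)"
proof (induct arbitrary: N N' k rule: std.induct)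
  case (std_var M i)
  have w: "wh\<^sup>*\<^sup>* (subst M N k) (subst (Var i) N k)" using whs_subst[OF std_var(1)] .
  show ?case
  proof (cases "k < i")
    case True then show ?thesis using w std.std_var[of "subst M N k" "i - 1"] by simp
  next
    case False
    show ?thesis
    proof (cases "i = k")
      case True then show ?thesis using w std_var(2) std_prepend[of "subst M N k" N N'] by simp
    next
      case False then show ?thesis using w \<open>\<not> k < i\<close> std.std_var[of "subst M N k" i] by simp
    qed
  qed
next
  case (std_abs M P Q)
  have w: "wh\<^sup>*\<^sup>* (subst M N k) (Abs (subst P (lift N 0) (Suc k)))"
    using whs_subst[OF std_abs(1), of N k] by simp
  have "std (subst P (lift N 0) (Suc k)) (subst Q (lift N' 0) (Suc k))"
    using std_abs(3)[OF std_lift[OF std_abs(4)]] .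
  then show ?case using std.std_abs[OF w] by simp
next
  case (std_app M P1 P2 Q1 Q2)
  have w: "wh\<^sup>*\<^sup>* (subst M N k) (App (subst P1 N k) (subst P2 N k))"
    using whs_subst[OF std_app(1), of N k] by simp
  show ?case using std.std_app[OF w std_app(3)[OF std_app(6)] std_app(5)[OF std_app(6)]] by simp
qed

inductive_cases std_abs_cases: "std M (Abs Q)"

lemma std_beta: "std M N \<Longrightarrow> beta N P \<Longrightarrow> std M P"
proof (induct arbitrary: P rule: std.induct)
  case (std_var M i) from std_var(2) show ?case by (auto elim: beta.cases)
next
  case (std_abs M P0 Q)
  from std_abs(4) obtain Q' where "P = Abs Q'" "beta Q Q'" by (auto elim: beta.cases)
  then show ?case using std.std_abs[OF std_abs(1) std_abs(3)] by simp
next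
  case (std_app M P1 P2 Q1 Q2)
  from std_app(6) consider (r) R where "Q1 = Abs R" "P = subst R Q2 0"
    | (l) Q1' where "beta Q1 Q1'" "P = App Q1' Q2"
    | (rr) Q2' where "beta Q2 Q2'" "P = App Q1 Q2'"
    by (cases rule: beta.cases) auto
  then show ?case
  proof cases
    case r
    from std_app(2)[unfolded r(1)] obtain P1' where P1': "wh\<^sup>*\<^sup>* P1 (Abs P1')" "std P1' R"
      by (cases rule: std.cases) auto
    have "wh\<^sup>*\<^sup>* M (App (Abs P1') P2)"
      using std_app(1) whs_app[OF P1'(1)] by (rule rtranclp_trans)
    then have "wh\<^sup>*\<^sup>* M (subst P1' P2 0)"
      by (meson rtranclp.rtrancl_into_rtrancl wh.wh_redex)
    moreover have "std (subst P1' P2 0) (subst R Q2 0)" using std_subst P1'(2) std_app(4) by blast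
    ultimately show ?thesis using r std_prepend by simp
  next
    case l then show ?thesis using std.std_app[OF std_app(1) std_app(3)[OF l(1)] std_app(4)] by simp
  next
    case rr then show ?thesis using std.std_app[OF std_app(1) std_app(2) std_app(5)[OF rr(1)]] by simp
  qed
qed

lemma beta_std: "beta\<^sup>*\<^sup>* M N \<Longrightarrow> std M N"
proof (induct rule: rtranclp_induct)
  case base show ?case by (rule std_refl)
next
  case (step y z) then show ?case using std_beta by blast
qed

lemma std_var_app: "std M N \<Longrightarrow> is_var_app N \<Longrightarrow> \<exists>H. wh\<^sup>*\<^sup>* M H \<and> is_var_app H"
proof (induct rule: std.induct)
  case (std_var M i) then show ?case by (intro exI[of _ "Var i"]) simp
next
  case (std_abs M P Q) then show ?case by simp
next
  case (std_app M P1 P2 Q1 Q2)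
  then obtain H where H: "wh\<^sup>*\<^sup>* P1 H" "is_var_app H" by auto
  have "wh\<^sup>*\<^sup>* M (App H P2)" using std_app(1) whs_app[OF H(1)] by (rule rtranclp_trans)
  then show ?case using H(2) by (intro exI[of _ "App H P2"]) simp
qed

lemma heads_abs: "head\<^sup>*\<^sup>* s t \<Longrightarrow> head\<^sup>*\<^sup>* (Abs s) (Abs t)"
proof (induct rule: rtranclp_induct)
  case base show ?case by simp
next
  case (step y z) show ?case by (rule rtranclp.rtrancl_into_rtrancl[OF step(3) head.head_abs[OF step(2)]])
qed

lemma whs_heads: "wh\<^sup>*\<^sup>* s t \<Longrightarrow> head\<^sup>*\<^sup>* s t"
proof (induct rule: rtranclp_induct)
  case base show ?case by simp
next
  case (step y z) show ?case by (rule rtranclp.rtrancl_into_rtrancl[OF step(3) wh_head[OF step(2)]])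
qed

lemma std_hnf: "std M N \<Longrightarrow> is_hnf N \<Longrightarrow> \<exists>H. head\<^sup>*\<^sup>* M H \<and> is_hnf H"
proof (induct rule: std.induct)
  case (std_var M i) then show ?case using whs_heads[OF std_var(1)] by (intro exI[of _ "Var i"]) simp
next
  case (std_abs M P Q)
  then obtain H where H: "head\<^sup>*\<^sup>* P H" "is_hnf H" by auto
  have "head\<^sup>*\<^sup>* M (Abs H)" using whs_heads[OF std_abs(1)] heads_abs[OF H(1)] by (rule rtranclp_trans)
  then show ?case using H(2) by (intro exI[of _ "Abs H"]) simp
next
  case (std_app M P1 P2 Q1 Q2)
  then have "is_var_app (App Q1 Q2)" by simp
  from std_var_app[OF std.std_app[OF std_app(1,2,4)] this] obtain H where
    H: "wh\<^sup>*\<^sup>* M H" "is_var_app H" by blast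
  have "is_hnf H" using H(2) by (cases H) auto
  then show ?case using whs_heads[OF H(1)] by blast
qed

lemma head_beta: "head s t \<Longrightarrow> beta s t"
  by (induct rule: head.induct) (auto intro: beta.intros)

lemma heads_betas: "head\<^sup>*\<^sup>* s t \<Longrightarrow> beta\<^sup>*\<^sup>* s t"
proof (induct rule: rtranclp_induct)
  case base show ?case by simp
next
  case (step y z) show ?case by (rule rtranclp.rtrancl_into_rtrancl[OF step(3) head_beta[OF step(2)]])
qed

lemma hnf_reflect: "beta\<^sup>*\<^sup>* M N \<Longrightarrow> has_hnf N \<Longrightarrow> has_hnf M"
proof -
  assume r: "beta\<^sup>*\<^sup>* M N" and "has_hnf N"
  then obtain k H where "(head ^^ k) N H" "is_hnf H" unfolding has_hnf_def by blast
  have "head\<^sup>*\<^sup>* N H" using \<open>(head ^^ k) N H\<close> by (rule relpowp_imp_rtranclp)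
  then have "beta\<^sup>*\<^sup>* N H" by (rule heads_betas)
  with r have "beta\<^sup>*\<^sup>* M H" by (rule rtranclp_trans)
  then have "std M H" by (rule beta_std)
  from std_hnf[OF this \<open>is_hnf H\<close>] obtain H' where H': "head\<^sup>*\<^sup>* M H'" "is_hnf H'" by blast
  obtain n where "(head ^^ n) M H'" using rtranclp_imp_relpowp[OF H'(1)] by (elim exE)
  then show "has_hnf M" unfolding has_hnf_def using H'(2) by (intro exI conjI)
qed


definition annot :: "nat option \<Rightarrow> nat option \<Rightarrow> bool" where
  "annot a' a \<longleftrightarrow> (a' = None \<and> a = None) \<or> (\<exists>k1 k2. a' = Some k1 \<and> a = Some k2 \<and> k1 \<le> k2)"

definition ple :: "(node \<times> nat option) option \<Rightarrow> (node \<times> nat option) option \<Rightarrow> bool" where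
  "ple a b \<longleftrightarrow> map_option fst a = map_option fst b \<and>
     (\<forall>x1 x2. a = Some x1 \<longrightarrow> b = Some x2 \<longrightarrow>
        (snd x1 = None \<and> snd x2 = None) \<or>
        (\<exists>k1 k2. snd x1 = Some k1 \<and> snd x2 = Some k2 \<and> k1 \<le> k2))"

lemma ple_alt: "ple a b \<longleftrightarrow> (a = None \<and> b = None) \<or> (\<exists>n x y. a = Some (n, x) \<and> b = Some (n, y) \<and> annot x y)"
proof (cases a)
  case None then show ?thesis unfolding ple_def by auto
next
  case (Some u)
  obtain n x where u: "u = (n, x)" by fastforce
  show ?thesis
  proof (cases b)
    case None then show ?thesis using Some unfolding ple_def by auto
  next
    case (Some v)
    obtain m y where v: "v = (m, y)" by fastforce
    show ?thesis using \<open>a = Some u\<close> Some u v unfolding ple_def annot_def by auto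
  qed
qed

lemma annot_refl: "annot x x"
  unfolding annot_def by (cases x) auto

lemma annot_trans: "annot x y \<Longrightarrow> annot y z \<Longrightarrow> annot x z"
  unfolding annot_def by auto

lemma ple_refl: "ple a a"
  unfolding ple_alt using annot_refl by (cases a) auto

lemma ple_trans: "ple a b \<Longrightarrow> ple b c \<Longrightarrow> ple a c"
  unfolding ple_alt using annot_trans by fastforce

lemma atree_le_ple: "atree_le T1 T2 \<longleftrightarrow> (\<forall>p. ple (T1 p) (T2 p))"
  unfolding atree_le_def ple_def by blast


lemma par_app_hnf:
  assumes "is_var_app s" "par (App s u) N"
  shows "\<exists>s' u'. N = App s' u' \<and> par s s' \<and> par u u'"
  using assms(2)
proof (cases rule: par.cases)
  case par_app then show ?thesis by blast
next
  case par_beta then show ?thesis using assms(1) by simp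
qed

lemma var_app_hnf: "is_var_app s \<Longrightarrow> is_hnf s"
  by (cases s) simp_all

lemma root_par: assumes "is_hnf H" "par H H'" shows "root_node H' = root_node H"
proof (cases H)
  case (Var i)
  have "par (Var i) H'" using assms(2) Var by simp
  then have "H' = Var i" by (auto elim: par_cases(1))
  then show ?thesis using Var by simp
next
  case (Abs t)
  have "par (Abs t) H'" using assms(2) Abs by simp
  then obtain t' where "H' = Abs t'" by (auto elim: par_cases(2))
  then show ?thesis using Abs by simp
next
  case (App s u)
  then have "is_var_app s" using assms(1) by simp
  then show ?thesis using par_app_hnf[of s u H'] App assms(2) by auto
qed


lemma bt_spine_mono:
  "(\<forall>M N. par M N \<longrightarrow> ple (bt N p) (bt M p)) \<and>
   (\<forall>H H' a a'. is_hnf H \<longrightarrow> par H H' \<longrightarrow> annot a' a \<longrightarrow> ple (spine H' a' p) (spine H a p))"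
proof (induct p rule: length_induct)
  case (1 p)
  have IHb: "\<And>q M N. length q < length p \<Longrightarrow> par M N \<Longrightarrow> ple (bt N q) (bt M q)" using 1 by blast
  have IHs: "\<And>q H H' a a'. length q < length p \<Longrightarrow> is_hnf H \<Longrightarrow> par H H' \<Longrightarrow> annot a' a \<Longrightarrow>
     ple (spine H' a' q) (spine H a q)" using 1 by blast
  have S: "\<And>H H' a a'. is_hnf H \<Longrightarrow> par H H' \<Longrightarrow> annot a' a \<Longrightarrow> ple (spine H' a' p) (spine H a p)"
  proof -
    fix H H' a a' assume h: "is_hnf H" "par H H'" "annot a' a"
    show "ple (spine H' a' p) (spine H a p)"
    proof (cases p)
      case Nil
      then show ?thesis using root_par[OF h(1,2)] h(3) unfolding ple_def annot_def by auto
    next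
      case (Cons x q)
      then have lq: "length q < length p" by simp
      show ?thesis
      proof (cases H)
        case (Var i)
        then have "H' = Var i" using h(2) by auto
        then show ?thesis using Var Cons by (simp add: ple_refl)
      next
        case (Abs t)
        then obtain t' where t': "H' = Abs t'" "par t t'" using h(2) by auto
        have "is_hnf t" using h(1) Abs by simp
        show ?thesis
        proof (cases x)
          case 0
          then show ?thesis using Abs t' Cons IHs[OF lq \<open>is_hnf t\<close> t'(2), of None None]
            by (simp add: annot_def)
        next
          case (Suc y) then show ?thesis using Abs t' Cons by (simp add: ple_refl)
        qed
      next
        case (App s u)
        then have va: "is_var_app s" using h(1) by simp
        then obtain s' u' where su: "H' = App s' u'" "par s s'" "par u u'"
          using par_app_hnf[of s u H'] h(2) App by auto
        show ?thesis
        proof (cases x)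
          case 0 then show ?thesis using App su Cons by (simp add: ple_refl)
        next
          case (Suc y)
          show ?thesis
          proof (cases y)
            case 0
            then show ?thesis using App su Cons Suc IHs[OF lq var_app_hnf[OF va] su(2), of None None]
              by (simp add: annot_def)
          next
            case (Suc z)
            show ?thesis
            proof (cases z)
              case 0
              then show ?thesis using App su Cons Suc \<open>x = Suc y\<close> IHb[OF lq su(3)] by simp
            next
              case (Suc w) then show ?thesis using App su Cons \<open>x = Suc y\<close> \<open>y = Suc z\<close> by (simp add: ple_refl)
            qed
          qed
        qed
      qed
    qed
  qed
  have B: "\<And>M N. par M N \<Longrightarrow> ple (bt N p) (bt M p)"
  proof -
    fix M N assume mn: "par M N"
    show "ple (bt N p) (bt M p)"
    proof (cases "has_hnf M")
      case True
      note c = clock_par'[OF True mn]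
      have "ple (spine (hnf_of N) (Some (hsteps N)) p) (spine (hnf_of M) (Some (hsteps M)) p)"
        using S[OF has_hnf_obtain(2)[OF True] c(3)] c(2) by (simp add: annot_def)
      then show ?thesis using True c(1) by simp
    next
      case False
      then have "\<not> has_hnf N" using hnf_reflect par_beta_rtr mn by blast
      then show ?thesis using False by (simp add: ple_refl)
    qed
  qed
  show ?case using S B by blast
qed

lemma red_ple: "par\<^sup>*\<^sup>* N Z \<Longrightarrow> ple (bt Z p) (bt N p)"
proof (induct rule: rtranclp_induct)
  case base then show ?case by (rule ple_refl)
next
  case (step y z)
  have "ple (bt z p) (bt y p)" using bt_spine_mono[of p] step(2) by blast
  from ple_trans[OF this step(3)] show ?case .
qed

theorem theorem4p6:
  fixes M N :: dB
  assumes "\<not> (\<exists>M'. beta_red M M' \<and> atree_le (BTc M') (BTc N))"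
  shows "\<not> beta_eq M N"
proof
  assume "beta_eq M N"
  then obtain Z where Z: "beta_red M Z" "beta_red N Z" using CR by blast
  then have "par\<^sup>*\<^sup>* N Z" using beta_rtr_par_rtr by simp
  then have "\<forall>p. ple (BTc Z p) (BTc N p)" using red_ple by simp
  then have "atree_le (BTc Z) (BTc N)" unfolding atree_le_ple .
  then show False using assms Z(1) by blast
qed

end
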